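(* In the standing setup, let $\alpha=(\alpha_n)$ be a subsequence of $(p_n)$ with $\sum_{n=0}^\infty \ell_n^\alpha<+\infty$, let $\beta_n=\alpha_0\cdots\alpha_n$ and $r_n=B_\infty(\beta_n^{-1}i,\,i)$. Then $(r_n)_n$ converges to a real number $r_\alpha$, and $|r_n|\le\sum_{i=0}^\infty\ell_i^\alpha$ for all $n\ge0$; hence $|r_\alpha|\le\sum_{i=0}^\infty\ell_i^\alpha$.
   Context: Standing setup: $\mathbb H$ is the upper half-plane with distance $d$, $\partial\mathbb H=\mathbb R\cup\{\infty\}$; for $v\in T^1\mathbb H$, $v(t)$ is the unit-speed geodesic with initial vector $v$, $v(+\infty)$ its forward endpoint. Busemann function: $B_\xi(x,y)=\lim_{t\to\infty}(d(x,c(t))-d(y,c(t)))$ for a geodesic ray $c$ converging to $\xi$. For a horocycle $\tilde H$ and a parabolic isometry $p$ preserving it, $\ell(\tilde H,p)$ is the horocyclic arc length between $x$ and $px$ ($x\in\tilde H$); positive orientation is that of an arc-length parametrization with $p\tilde H(s)=\tilde H(s+\ell(\tilde H,p))$; $\tilde u$ is tangent to the oriented pair $(\tilde H,p)$ if $\tilde u(\mathbb R^+)$ is tangent to $\tilde H$ at $\tilde u(t_0)=\tilde H(s_0)$, $t_0\ge0$, with $\frac{d\tilde u}{dt}(t_0)=\frac{d\tilde H}{ds}(s_0)$ for a positively oriented parametrization. $\Gamma$ is a torsion-free Fuchsian group, $S=\Gamma\backslash\mathbb H$ has at least one cusp, $u\in T^1S$ is cusp-recurrent with lift $\tilde u$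 normalized so that $\tilde u(0)=i$, $\tilde u(+\infty)=\infty$. $(\tilde H_n,p_n)_{n\in\mathbb N}$: $p_n\in\Gamma$ parabolic with fixed point $x_n\in\mathbb R$, $\tilde H_n$ horocycle centered at $x_n$, $\tilde u$ tangent to the oriented pair $(\tilde H_n,p_n)$ at $\tilde u(t_n)$, $(t_n)$ nonnegative increasing to $+\infty$, $x_n$ positive distinct increasing to $+\infty$, horoballs bounded by the $\tilde H_n$ pairwise disjoint, $\ell(\tilde H_n,p_n)\to0$. A subsequence $\alpha$ is $\alpha_n=p_{k_n}$ ($k_n$ increasing), $\ell_n^\alpha=\ell(\tilde H_{k_n},p_{k_n})$. *)

theory Defs
  imports "HOL-Analysis.Analysis"
begin

type_synonym mat2 = "real^2^2"

definition uhp :: "complex set" where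
  "uhp = {z. Im z > 0}"

definition hdist :: "complex \<Rightarrow> complex \<Rightarrow> real" where
  "hdist z w = arcosh (1 + (cmod (z - w))^2 / (2 * Im z * Im w))"

definition busemann_inf :: "complex \<Rightarrow> complex \<Rightarrow> real" where
  "busemann_inf z w =
     Lim at_top (\<lambda>t::real. hdist z (\<i> * of_real (exp t)) - hdist w (\<i> * of_real (exp t)))"

definition moeb :: "mat2 \<Rightarrow> complex \<Rightarrow> complex" where
  "moeb A z = (of_real (A$1$1) * z + of_real (A$1$2)) / (of_real (A$2$1) * z + of_real (A$2$2))"

primrec mpow :: "mat2 \<Rightarrow> nat \<Rightarrow> mat2" where
  "mpow A 0 = mat 1"
| "mpow A (Suc n) = mpow A n ** A"

primrec mprod_upto :: "(nat \<Rightarrow> mat2) \<Rightarrow> nat \<Rightarrow> mat2" where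
  "mprod_upto f 0 = f 0"
| "mprod_upto f (Suc n) = mprod_upto f n ** f (Suc n)"

definition is_pm_id :: "mat2 \<Rightarrow> bool" where
  "is_pm_id A \<longleftrightarrow> A = mat 1 \<or> A = - mat 1"

definition parabolic :: "mat2 \<Rightarrow> bool" where
  "parabolic A \<longleftrightarrow> det A = 1 \<and> \<not> is_pm_id A \<and> \<bar>trace A\<bar> = 2"

definition fixes_real :: "mat2 \<Rightarrow> real \<Rightarrow> bool" where
  "fixes_real A x \<longleftrightarrow> A$2$1 * x + A$2$2 \<noteq> 0 \<and> moeb A (of_real x) = of_real x"

text \<open>A torsion-free Fuchsian group, represented by its full preimage G in SL(2,R)
  (so G contains -1 and is a discrete subgroup of SL(2,R)).\<close>
definition torsion_free_fuchsian :: "mat2 set \<Rightarrow> bool" where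
  "torsion_free_fuchsian G \<longleftrightarrow>
     (\<forall>A\<in>G. det A = 1) \<and> mat 1 \<in> G \<and> - mat 1 \<in> G \<and>
     (\<forall>A\<in>G. \<forall>B\<in>G. A ** B \<in> G) \<and> (\<forall>A\<in>G. matrix_inv A \<in> G) \<and>
     (\<forall>A\<in>G. \<exists>e>0. \<forall>B\<in>G. dist B A < e \<longrightarrow> B = A) \<and>
     (\<forall>A\<in>G. \<forall>n>0. is_pm_id (mpow A n) \<longrightarrow> is_pm_id A)"

definition horocycle :: "real \<Rightarrow> real \<Rightarrow> complex set" where
  "horocycle x h = {z. Im z > 0 \<and> cmod (z - (of_real x + \<i> * of_real (h/2))) = h/2}"

definition horoball :: "real \<Rightarrow> real \<Rightarrow> complex set" where
  "horoball x h = {z. Im z > 0 \<and> cmod (z - (of_real x + \<i> * of_real (h/2))) < h/2}"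

definition arclength_param :: "complex set \<Rightarrow> (real \<Rightarrow> complex) \<Rightarrow> bool" where
  "arclength_param C H \<longleftrightarrow> bij_betw H UNIV C \<and>
     (\<forall>s. \<exists>v. (H has_vector_derivative v) (at s) \<and> cmod v = Im (H s))"

definition shift_param :: "complex set \<Rightarrow> mat2 \<Rightarrow> real \<Rightarrow> (real \<Rightarrow> complex) \<Rightarrow> bool" where
  "shift_param C p l H \<longleftrightarrow> arclength_param C H \<and> (\<forall>s. moeb p (H s) = H (s + l))"

text \<open>Horocyclic length l(C,p): the arc length between z and pz; the arc-length
  parametrizations H with p H(s) = H(s + l(C,p)) are the positively oriented ones.\<close>
definition horo_length :: "complex set \<Rightarrow> mat2 \<Rightarrow> real" where
  "horo_length C p = (THE l. l \<ge> 0 \<and> (\<exists>H. shift_param C p l H))"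

text \<open>Normalized lift of u: the unit-speed geodesic with u(0) = i, u(+\<infinity>) = \<infinity>.\<close>
definition u_lift :: "real \<Rightarrow> complex" where
  "u_lift t = \<i> * of_real (exp t)"

definition tangent_at :: "real \<Rightarrow> complex set \<Rightarrow> mat2 \<Rightarrow> bool" where
  "tangent_at t0 C p \<longleftrightarrow> t0 \<ge> 0 \<and>
     (\<exists>H s0 v. shift_param C p (horo_length C p) H \<and> H s0 = u_lift t0 \<and>
        (u_lift has_vector_derivative v) (at t0) \<and> (H has_vector_derivative v) (at s0))"

end

theory Submission
  imports Defs
begin

lemma darboux_core:
  fixes f f' :: "real \<Rightarrow> real"
  assumes der: "\<And>s. DERIV f s :> f' s" and a: "a > 0"
    and pm: "\<And>s. f' s = a \<or> f' s = - a"
    and s12: "s1 < s2" and f1: "f' s1 = a" and f2: "f' s2 = - a"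
  shows False
proof -
  have cont: "\<forall>x. s1 \<le> x \<and> x \<le> s2 \<longrightarrow> isCont f x" using der DERIV_isCont by blast
  obtain M m where M: "\<forall>x. s1 \<le> x \<and> x \<le> s2 \<longrightarrow> f x \<le> M" and m: "s1 \<le> m" "m \<le> s2" "f m = M"
    using isCont_eq_Ub[OF less_imp_le[OF s12] cont] by blast
  obtain d1 where d1: "d1 > 0" "\<forall>h>0. h < d1 \<longrightarrow> f s1 < f (s1 + h)"
    using DERIV_pos_inc_right[OF der[of s1]] f1 a by auto
  obtain d2 where d2: "d2 > 0" "\<forall>h>0. h < d2 \<longrightarrow> f s2 < f (s2 - h)"
    using DERIV_neg_dec_left[OF der[of s2]] f2 a by auto
  have "m \<noteq> s1"
  proof
    assume "m = s1"
    define h where "h = min d1 (s2 - s1) / 2"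
    have "h > 0" "h < d1" "s1 + h \<le> s2" unfolding h_def using d1 s12 by (auto simp: min_def field_simps)
    then have "f s1 < f (s1 + h)" "f (s1 + h) \<le> M" using d1 M s12 by auto
    then show False using m \<open>m = s1\<close> by auto
  qed
  moreover have "m \<noteq> s2"
  proof
    assume "m = s2"
    define h where "h = min d2 (s2 - s1) / 2"
    have "h > 0" "h < d2" "s1 \<le> s2 - h" unfolding h_def using d2 s12 by (auto simp: min_def field_simps)
    then have "f s2 < f (s2 - h)" "f (s2 - h) \<le> M" using d2 M s12 by auto
    then show False using m \<open>m = s2\<close> by auto
  qed
  ultimately have mi: "s1 < m" "m < s2" using m by auto
  have "f' m = 0"
  proof (rule DERIV_local_max[OF der[of m], of "min (m - s1) (s2 - m)"])
    show "0 < min (m - s1) (s2 - m)" using mi by auto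
    show "\<forall>y. \<bar>m - y\<bar> < min (m - s1) (s2 - m) \<longrightarrow> f y \<le> f m"
      using M m by (auto simp: abs_if split: if_splits)
  qed
  then show False using pm[of m] a by auto
qed

lemma darboux_pm:
  fixes f f' :: "real \<Rightarrow> real"
  assumes der: "\<And>s. DERIV f s :> f' s" and a: "a > 0"
    and pm: "\<And>s. f' s = a \<or> f' s = - a"
  shows "(\<forall>s. f' s = a) \<or> (\<forall>s. f' s = - a)"
proof (rule ccontr)
  assume "\<not> ?thesis"
  then obtain s1 s2 where f1: "f' s1 = a" and f2: "f' s2 = - a" using pm by metis
  have "s1 \<noteq> s2" using f1 f2 a by auto
  then consider "s1 < s2" | "s2 < s1" by linarith
  then show False
  proof cases
    case 1 then show False using darboux_core[OF der a pm 1 f1 f2] by simp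
  next
    case 2
    have der2: "\<And>s. DERIV (\<lambda>s. - f s) s :> - f' s" using der by (auto intro: derivative_eq_intros)
    have pm2: "\<And>s. - f' s = a \<or> - f' s = - a" using pm by (metis minus_minus)
    show False using darboux_core[OF der2 a pm2 2] f1 f2 by auto
  qed
qed

definition adj2 :: "mat2 \<Rightarrow> mat2" where
  "adj2 A = (\<chi> i j. if i = 1 then (if j = 1 then A$2$2 else - A$1$2) else (if j = 1 then - A$2$1 else A$1$1))"

lemma two_ne: "(1::2) \<noteq> 2" "(2::2) \<noteq> 1" by simp_all

lemma adj2_nth[simp]: "adj2 A $1$1 = A$2$2" "adj2 A $1$2 = - A$1$2" "adj2 A $2$1 = - A$2$1" "adj2 A $2$2 = A$1$1"
  by (simp_all add: adj2_def)

lemma mult2_nth[simp]: "((A::mat2) ** B)$i$j = A$i$1 * B$1$j + A$i$2 * B$2$j"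
  by (simp add: matrix_matrix_mult_def sum_2)

lemma mat1_nth[simp]: "(mat 1 :: mat2)$1$1 = 1" "(mat 1 :: mat2)$1$2 = 0" "(mat 1 :: mat2)$2$1 = 0" "(mat 1 :: mat2)$2$2 = 1"
  by (simp_all add: mat_def)

lemma mat2_eq: "(A::mat2) = B \<longleftrightarrow> A$1$1 = B$1$1 \<and> A$1$2 = B$1$2 \<and> A$2$1 = B$2$1 \<and> A$2$2 = B$2$2"
  by (auto simp: vec_eq_iff forall_2)

lemma det2: "det (A::mat2) = A$1$1 * A$2$2 - A$1$2 * A$2$1" by (rule det_2)

lemma adj2_inv: "det (A::mat2) = 1 \<Longrightarrow> A ** adj2 A = mat 1 \<and> adj2 A ** A = mat 1"
  by (simp add: mat2_eq det2 algebra_simps)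

lemma matrix_inv_det1: assumes "det (A::mat2) = 1" shows "matrix_inv A = adj2 A"
proof -
  have ex: "A ** adj2 A = mat 1 \<and> adj2 A ** A = mat 1" using adj2_inv[OF assms] .
  let ?B = "matrix_inv A"
  have B: "A ** ?B = mat 1 \<and> ?B ** A = mat 1"
    unfolding matrix_inv_def by (rule someI[of _ "adj2 A"]) (rule ex)
  have "?B = ?B ** (A ** adj2 A)" using ex by simp
  also have "\<dots> = (?B ** A) ** adj2 A" by (simp add: matrix_mul_assoc)
  also have "\<dots> = adj2 A" using B by simp
  finally show ?thesis .
qed

lemma adj2_mult: "adj2 ((A::mat2) ** B) = adj2 B ** adj2 A"
  by (simp add: mat2_eq algebra_simps)

lemma det_adj2: "det (adj2 A) = det A" by (simp add: det2)

lemma det_mult2: "det ((A::mat2) ** B) = det A * det B" by (rule det_mul)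

lemma den_nz:
  assumes "Im z > 0" "det (A::mat2) \<noteq> 0"
  shows "of_real (A$2$1) * z + of_real (A$2$2) \<noteq> 0"
proof
  assume h: "of_real (A$2$1) * z + of_real (A$2$2) = 0"
  then have "Im (of_real (A$2$1) * z + of_real (A$2$2)) = 0" by simp
  then have "A$2$1 = 0" using assms(1) by simp
  moreover then have "A$2$2 = 0" using h by simp
  ultimately show False using assms(2) by (simp add: det2)
qed

lemma moeb_Im:
  assumes "Im z > 0"
  shows "Im (moeb A z) = det A * Im z / (cmod (of_real (A$2$1) * z + of_real (A$2$2)))^2"
  unfolding moeb_def Im_divide det2 cmod_power2
  by (simp add: algebra_simps power2_eq_square)

lemma moeb_Im_pos:
  assumes "Im z > 0" "det A > 0" shows "Im (moeb A z) > 0"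
proof -
  have "of_real (A$2$1) * z + of_real (A$2$2) \<noteq> 0" using den_nz assms by force
  then show ?thesis using assms by (simp add: moeb_Im)
qed

lemma moeb_mult:
  assumes z: "Im z > 0" and A: "det A \<noteq> 0" and B: "det B > 0"
  shows "moeb (A ** B) z = moeb A (moeb B z)"
proof -
  have dB: "of_real (B$2$1) * z + of_real (B$2$2) \<noteq> 0" using den_nz z B by force
  have "Im (moeb B z) > 0" using moeb_Im_pos z B by blast
  then have dA: "of_real (A$2$1) * moeb B z + of_real (A$2$2) \<noteq> 0" using den_nz A by blast
  let ?N = "of_real (B$1$1) * z + of_real (B$1$2)" and ?D = "of_real (B$2$1) * z + of_real (B$2$2)"
  have w: "moeb B z = ?N / ?D" by (simp add: moeb_def)
  have fc: "\<And>a b c e N D::complex. D \<noteq> 0 \<Longrightarrow> (a*(N/D)+b)/(c*(N/D)+e) = (a*N+b*D)/(c*N+e*D)"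
  proof -
    fix a b c e N D :: complex assume D: "D \<noteq> 0"
    have "a*(N/D)+b = (a*N+b*D)/D" "c*(N/D)+e = (c*N+e*D)/D" using D by (simp_all add: field_simps)
    then show "(a*(N/D)+b)/(c*(N/D)+e) = (a*N+b*D)/(c*N+e*D)" using D by simp
  qed
  show ?thesis
    unfolding moeb_def w fc[OF dB] by (simp add: algebra_simps)
qed

lemma neg_mat2: "(- A::mat2)$i$j = - A$i$j" by simp

lemma parabolic_form:
  assumes par: "parabolic A" and fx: "fixes_real A x"
  shows "\<exists>s d. s\<^sup>2 = 1 \<and> d \<noteq> 0 \<and> A$1$1 = s + x* d \<and> A$1$2 = - x\<^sup>2 * d \<and> A$2$1 = d \<and> A$2$2 = s - x* d"
proof -
  define a where "a = A$1$1"
  define b where "b = A$1$2"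
  define d where "d = A$2$1"
  define e where "e = A$2$2"
  have v0: "d*x + e \<noteq> 0" using fx by (simp add: fixes_real_def d_def e_def)
  have "moeb A (of_real x) = of_real x" using fx by (simp add: fixes_real_def)
  then have "complex_of_real ((a*x+b)/(d*x+e)) = of_real x"
    by (simp add: moeb_def a_def b_def d_def e_def)
  then have "(a*x+b)/(d*x+e) = x" using of_real_eq_iff by blast
  then have bx: "a*x + b = x*(d*x+e)" using v0 by (simp add: field_simps)
  have det: "a*e - b* d = 1" using par by (simp add: parabolic_def det2 a_def b_def d_def e_def)
  have tr: "\<bar>a + e\<bar> = 2" using par by (simp add: parabolic_def trace_def sum_2 a_def e_def)
  define u where "u = a - x* d"
  define v where "v = d*x + e"
  have b: "b = x* v - a*x" using bx by (simp add: v_def)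
  have uv: "u* v = 1" using det unfolding u_def v_def b by (simp add: algebra_simps)
  have upv: "u + v = a + e" by (simp add: u_def v_def)
  have "(a+e)\<^sup>2 = \<bar>a+e\<bar>\<^sup>2" by simp
  also have "\<dots> = 4" using tr by simp
  finally have "(a+e)\<^sup>2 = 4" .
  then have "(u+v)\<^sup>2 = 4" using upv by simp
  moreover have "(u - v)\<^sup>2 = (u+v)\<^sup>2 - 4 * (u * v)" by (simp add: power2_eq_square algebra_simps)
  ultimately have "(u - v)\<^sup>2 = 0" using uv by simp
  then have uveq: "u = v" by simp
  have s2: "v\<^sup>2 = 1" using uv uveq by (simp add: power2_eq_square)
  have dnz: "d \<noteq> 0"
  proof
    assume d0: "d = 0"
    then have ae: "a = v" "e = v" "b = 0" using uveq b by (auto simp: u_def v_def)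
    have "v = 1 \<or> v = -1" using s2 by (simp add: power2_eq_1_iff)
    then have "A = mat 1 \<or> A = - mat 1" using ae d0
      unfolding mat2_eq a_def b_def d_def e_def by (auto simp: neg_mat2)
    then show False using par by (simp add: parabolic_def is_pm_id_def)
  qed
  have e': "e = v - x * d" "a = v + x * d" using uveq by (simp_all add: u_def v_def)
  show ?thesis
    apply (rule exI[of _ v], rule exI[of _ d])
    using s2 dnz e' b unfolding a_def b_def d_def e_def
    by (simp add: power2_eq_square algebra_simps)
qed

lemma moeb_form:
  assumes s2: "s\<^sup>2 = 1" and z: "Im z > 0"
    and M: "M$1$1 = s + x*d" "M$1$2 = - x\<^sup>2 * d" "M$2$1 = d" "M$2$2 = s - x*d"
  shows "moeb M z = of_real x + (z - of_real x) / (of_real (s*d) * (z - of_real x) + 1)"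
proof -
  define \<zeta> where "\<zeta> = z - of_real x"
  have Imz: "Im \<zeta> > 0" using z by (simp add: \<zeta>_def)
  have snz: "s \<noteq> 0" using s2 by auto
  have D: "of_real d * \<zeta> + of_real s \<noteq> 0"
  proof
    assume h: "of_real d * \<zeta> + of_real s = 0"
    then have "Im (of_real d * \<zeta> + of_real s) = 0" by simp
    then have "d = 0" using Imz by simp
    then show False using h snz by simp
  qed
  have D2: "of_real (s*d) * \<zeta> + 1 \<noteq> 0"
  proof
    assume "of_real (s*d) * \<zeta> + 1 = 0"
    then have "of_real s * (of_real d * \<zeta> + of_real s) = 0"
      using s2 by (simp add: algebra_simps power2_eq_square flip: of_real_mult)
    then show False using D snz by simp
  qed
  define S where "S = complex_of_real s"
  define X where "X = complex_of_real x"
  define Dd where "Dd = complex_of_real d"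
  have ss: "S * S = 1" using s2 by (simp add: S_def power2_eq_square flip: of_real_mult)
  have D': "Dd * \<zeta> + S \<noteq> 0" using D by (simp add: S_def Dd_def)
  have "moeb M z = (X * (Dd * \<zeta> + S) + S * \<zeta>) / (Dd * \<zeta> + S)"
    unfolding moeb_def M \<zeta>_def S_def X_def Dd_def by (simp add: algebra_simps power2_eq_square)
  also have "\<dots> = X + S * \<zeta> / (Dd * \<zeta> + S)" using D' by (simp add: field_simps)
  also have "S * \<zeta> / (Dd * \<zeta> + S) = \<zeta> / (S * Dd * \<zeta> + 1)"
  proof -
    have "S * (S * Dd * \<zeta> + 1) = Dd * \<zeta> + S" using ss by (simp add: algebra_simps)
    then have "S * \<zeta> / (Dd * \<zeta> + S) = S * \<zeta> / (S * (S * Dd * \<zeta> + 1))" by simp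
    also have "\<dots> = \<zeta> / (S * Dd * \<zeta> + 1)" using ss by (metis mult_divide_mult_cancel_left_if mult_zero_left zero_neq_one)
    finally show ?thesis .
  qed
  finally show ?thesis by (simp add: \<zeta>_def S_def X_def Dd_def)
qed

lemma phi_shift:
  assumes z: "Im z > 0" and w: "w = of_real x + (z - of_real x) / (of_real c * (z - of_real x) + 1)"
  shows "- 1 / (w - of_real x) = - 1 / (z - of_real x) - of_real c"
proof -
  define \<zeta> where "\<zeta> = z - of_real x"
  have Imz: "Im \<zeta> > 0" using z by (simp add: \<zeta>_def)
  have znz: "\<zeta> \<noteq> 0" using Imz by auto
  have D2: "of_real c * \<zeta> + 1 \<noteq> 0"
  proof
    assume h: "of_real c * \<zeta> + 1 = 0"
    then have "Im (of_real c * \<zeta> + 1) = 0" by simp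
    then have "c = 0" using Imz by simp
    then show False using h by simp
  qed
  have "w - of_real x = \<zeta> / (of_real c * \<zeta> + 1)" using w by (simp add: \<zeta>_def)
  then have "- 1 / (w - of_real x) = - (of_real c * \<zeta> + 1) / \<zeta>" by simp
  also have "\<dots> = - 1 / \<zeta> - of_real c" using znz by (simp add: field_simps)
  finally show ?thesis by (simp add: \<zeta>_def)
qed

lemma step_lemma:
  fixes x c :: real and w w' :: complex
  assumes x1: "x \<ge> 1" and c: "c > 0" and r0: "0 \<le> Re w" and r1: "Re w \<le> x"
    and i0: "0 < Im w" and i1: "Im w \<le> 1"
    and w': "w' = of_real x + (w - of_real x) / (of_real (- c) * (w - of_real x) + 1)"
  shows "0 \<le> Re w' \<and> Re w' \<le> x \<and> 0 < Im w' \<and> Im w' \<le> Im w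
     \<and> 0 \<le> ln (Im w / Im w') \<and> ln (Im w / Im w') \<le> 2*c*x"
proof -
  define y where "y = x - Re w"
  define b where "b = Im w"
  define N where "N = (1 + c*y)\<^sup>2 + c\<^sup>2 * b\<^sup>2"
  have y0: "0 \<le> y" "y \<le> x" using r0 r1 by (auto simp: y_def)
  have N1: "N \<ge> 1"
  proof -
    have "1 \<le> 1 + c*y" using y0 c by simp
    then have "1 \<le> (1 + c*y)\<^sup>2" by (rule one_le_power)
    moreover have "0 \<le> c\<^sup>2 * b\<^sup>2" by simp
    ultimately show ?thesis unfolding N_def by linarith
  qed
  have Re': "Re w' = x + (- y - c * (y\<^sup>2 + b\<^sup>2)) / N"
    unfolding w' N_def y_def b_def
    by (simp add: Re_divide power2_eq_square algebra_simps)
  have Im': "Im w' = b / N"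
    unfolding w' N_def y_def b_def
    by (simp add: Im_divide power2_eq_square algebra_simps)
  have b0: "0 < b" "b \<le> 1" using i0 i1 by (auto simp: b_def)
  have T: "x * N - y - c * (y\<^sup>2 + b\<^sup>2) \<ge> 0"
  proof -
    have e: "x * N - y - c * (y\<^sup>2 + b\<^sup>2) = (x - y) + c*(2*x*y - y\<^sup>2 - b\<^sup>2) + c\<^sup>2*x*(y\<^sup>2 + b\<^sup>2)"
      unfolding N_def by (simp add: power2_eq_square algebra_simps)
    have "2*x*y - y\<^sup>2 \<ge> x*y" using y0 by (simp add: power2_eq_square mult_right_mono)
    then have h1: "c*(2*x*y - y\<^sup>2 - b\<^sup>2) \<ge> c*(x*y - b\<^sup>2)" using c by (intro mult_left_mono) auto
    have "0 \<le> c\<^sup>2*x*y\<^sup>2" using x1 by simp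
    then have h2: "c\<^sup>2*x*(y\<^sup>2 + b\<^sup>2) \<ge> c\<^sup>2*x*b\<^sup>2" by (simp add: algebra_simps)
    have h3: "c*(x*y - b\<^sup>2) = c*x*y - c*b\<^sup>2" by (simp add: algebra_simps)
    have ge: "x * N - y - c * (y\<^sup>2 + b\<^sup>2) \<ge> (x - y) + c*x*y - c*b\<^sup>2 + c\<^sup>2*x*b\<^sup>2"
      unfolding e using h1 h2 h3 by linarith
    show ?thesis
    proof (cases "c*x \<ge> 1")
      case True
      have "c*b\<^sup>2*(c*x - 1) \<ge> 0" using True c by simp
      moreover have "(x - y) + c*x*y \<ge> 0" using y0 c x1 by simp
      ultimately show ?thesis using ge by (simp add: algebra_simps power2_eq_square)
    next
      case False
      have "y*(1 - c*x) \<le> x*(1 - c*x)" using False y0 by (intro mult_right_mono) auto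
      then have "(x - y) + c*x*y \<ge> c*x\<^sup>2" by (simp add: algebra_simps power2_eq_square)
      moreover have "b\<^sup>2 \<le> x\<^sup>2" using b0 x1 by (intro power_mono) auto
      moreover have "c\<^sup>2*x*b\<^sup>2 \<ge> 0" using c x1 by simp
      moreover have "c*b\<^sup>2 \<le> c*x\<^sup>2" using c \<open>b\<^sup>2 \<le> x\<^sup>2\<close> by (intro mult_left_mono) auto
      ultimately show ?thesis using ge by linarith
    qed
  qed
  have Npos: "N > 0" using N1 by simp
  have Rew0: "0 \<le> Re w'"
  proof -
    have "Re w' = (x * N - y - c * (y\<^sup>2 + b\<^sup>2)) / N" unfolding Re' using Npos by (simp add: field_simps)
    then show ?thesis using T Npos by simp
  qed
  have "0 \<le> c * (y\<^sup>2 + b\<^sup>2)" using c by simp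
  then have "- y - c * (y\<^sup>2 + b\<^sup>2) \<le> 0" using y0 by linarith
  then have Rew1: "Re w' \<le> x" unfolding Re' using Npos by (simp add: divide_nonpos_pos)
  have Im0: "0 < Im w'" unfolding Im' using Npos b0 by simp
  have Im1: "Im w' \<le> Im w" unfolding Im' b_def[symmetric] using N1 b0 by (simp add: divide_le_eq)
  have ratio: "Im w / Im w' = N" unfolding Im' b_def[symmetric] using Npos b0 by simp
  have Nle: "N \<le> exp (2*c*x)"
  proof -
    have "(1 + c*y)\<^sup>2 \<le> (1 + c*x)\<^sup>2" using c y0 by (intro power_mono) (auto intro: mult_left_mono)
    moreover have "c\<^sup>2 * b\<^sup>2 \<le> c\<^sup>2 * x\<^sup>2" using b0 x1 by (intro mult_left_mono power_mono) auto
    ultimately have "N \<le> 1 + 2*c*x + (2*c*x)\<^sup>2/2" unfolding N_def by (simp add: power2_eq_square algebra_simps)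
    also have "\<dots> \<le> exp (2*c*x)" using exp_lower_Taylor_quadratic[of "2*c*x"] c x1 by simp
    finally show ?thesis .
  qed
  have "ln N \<le> 2*c*x" using Nle Npos by (metis ln_exp ln_le_cancel_iff exp_gt_zero)
  moreover have "0 \<le> ln N" using N1 by simp
  ultimately show ?thesis using Rew0 Rew1 Im0 Im1 ratio by simp
qed

lemma vd_Re: "(g has_vector_derivative G) (at s) \<Longrightarrow> ((\<lambda>s. Re (g s)) has_real_derivative Re G) (at s)"
proof -
  assume a: "(g has_vector_derivative G) (at s)"
  have "((\<lambda>s. Re (g s)) has_derivative (\<lambda>t. Re (t *\<^sub>R G))) (at s)"
    using has_derivative_Re[OF a[unfolded has_vector_derivative_def]] .
  moreover have "(\<lambda>t. Re (t *\<^sub>R G)) = (*) (Re G)" by (auto simp: fun_eq_iff)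
  ultimately show ?thesis by (simp add: has_field_derivative_def)
qed

lemma vd_Im: "(g has_vector_derivative G) (at s) \<Longrightarrow> ((\<lambda>s. Im (g s)) has_real_derivative Im G) (at s)"
proof -
  assume a: "(g has_vector_derivative G) (at s)"
  have "((\<lambda>s. Im (g s)) has_derivative (\<lambda>t. Im (t *\<^sub>R G))) (at s)"
    using has_derivative_Im[OF a[unfolded has_vector_derivative_def]] .
  moreover have "(\<lambda>t. Im (t *\<^sub>R G)) = (*) (Im G)" by (auto simp: fun_eq_iff)
  ultimately show ?thesis by (simp add: has_field_derivative_def)
qed

lemma horo_facts:
  assumes h: "h > 0" and z: "z \<in> horocycle x h"
  shows "Im z > 0" "(Re z - x)\<^sup>2 + (Im z)\<^sup>2 = h * Im z" "Im (- 1 / (z - of_real x)) = 1 / h"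
    "(cmod (z - of_real x))\<^sup>2 = h * Im z"
proof -
  show iz: "Im z > 0" using z by (simp add: horocycle_def)
  have "cmod (z - (of_real x + \<i> * of_real (h/2))) = h/2" using z by (simp add: horocycle_def)
  then have "(cmod (z - (of_real x + \<i> * of_real (h/2))))\<^sup>2 = (h/2)\<^sup>2" by metis
  then have "(Re z - x)\<^sup>2 + (Im z - h/2)\<^sup>2 = (h/2)\<^sup>2" by (simp add: cmod_power2)
  then show e: "(Re z - x)\<^sup>2 + (Im z)\<^sup>2 = h * Im z" by (simp add: power2_eq_square algebra_simps)
  show cm: "(cmod (z - of_real x))\<^sup>2 = h * Im z" using e by (simp add: cmod_power2)
  have "Im (- 1 / (z - of_real x)) = Im z / ((Re z - x)\<^sup>2 + (Im z)\<^sup>2)"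
    by (simp add: Im_divide power2_eq_square)
  also have "\<dots> = 1 / h" using e iz h by simp
  finally show "Im (- 1 / (z - of_real x)) = 1 / h" .
qed

lemma phi_deriv:
  fixes H :: "real \<Rightarrow> complex"
  assumes "(H has_vector_derivative v) (at s)" "H s \<noteq> X"
  shows "((\<lambda>s. - 1 / (H s - X)) has_vector_derivative v / (H s - X)\<^sup>2) (at s)"
proof -
  have d: "((\<lambda>w. - 1 / (w - X)) has_field_derivative 1 / (H s - X)\<^sup>2) (at (H s))"
    using assms(2) by (auto intro!: derivative_eq_intros simp: field_simps power2_eq_square)
  have "(((\<lambda>w. - 1 / (w - X)) \<circ> H) has_vector_derivative v * (1 / (H s - X)\<^sup>2)) (at s)"
    by (rule field_vector_diff_chain_at[OF assms(1) d])
  then show ?thesis by (simp add: o_def)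
qed

lemma shift_lin:
  assumes h: "h > 0"
    and pform: "\<And>z. Im z > 0 \<Longrightarrow> moeb p z = of_real x + (z - of_real x) / (of_real c * (z - of_real x) + 1)"
    and sp: "shift_param (horocycle x h) p l H"
  shows "\<exists>\<sigma>. (\<sigma> = 1 \<or> \<sigma> = -1) \<and> \<sigma> * l = - c * h \<and>
     (\<forall>s w. (H has_vector_derivative w) (at s) \<longrightarrow> Re (w / (H s - of_real x)\<^sup>2) = \<sigma> / h \<and> Im (w / (H s - of_real x)\<^sup>2) = 0)"
proof -
  have sp1: "arclength_param (horocycle x h) H" using sp unfolding shift_param_def by (rule conjunct1)
  have sp2: "\<forall>s. moeb p (H s) = H (s + l)" using sp unfolding shift_param_def by (rule conjunct2)
  have bij: "bij_betw H UNIV (horocycle x h)" using sp1 unfolding arclength_param_def by (rule conjunct1)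
  have ar: "\<forall>s. \<exists>v. (H has_vector_derivative v) (at s) \<and> cmod v = Im (H s)"
    using sp1 unfolding arclength_param_def by (rule conjunct2)
  have sh: "\<And>s. moeb p (H s) = H (s + l)" using sp2 by simp
  have inC: "\<And>s. H s \<in> horocycle x h" by (rule bij_betw_apply[OF bij]) simp
  have ImH: "\<And>s. Im (H s) > 0" using horo_facts(1)[OF h inC] .
  have Hx: "H s \<noteq> of_real x" for s
  proof
    assume "H s = of_real x"
    then have "Im (H s) = 0" by simp
    then show False using ImH[of s] by simp
  qed
  define g where "g = (\<lambda>s. - 1 / (H s - of_real x))"
  have Img: "\<And>s. Im (g s) = 1 / h" unfolding g_def using horo_facts(3)[OF h inC] .
  have key: "(Re (w / (H s - of_real x)\<^sup>2))\<^sup>2 = (1 / h)\<^sup>2 \<and> Im (w / (H s - of_real x)\<^sup>2) = 0"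
    if hw: "(H has_vector_derivative w) (at s)" for s w
  proof -
    obtain v where v: "(H has_vector_derivative v) (at s)" "cmod v = Im (H s)" using ar by blast
    have vw: "v = w" using vector_derivative_unique_at[OF v(1) hw] .
    have gd: "(g has_vector_derivative w / (H s - of_real x)\<^sup>2) (at s)"
      unfolding g_def by (rule phi_deriv[OF hw Hx])
    have "((\<lambda>s. Im (g s)) has_real_derivative Im (w / (H s - of_real x)\<^sup>2)) (at s)" by (rule vd_Im[OF gd])
    moreover have "((\<lambda>s. Im (g s)) has_real_derivative 0) (at s)" unfolding Img by simp
    ultimately have im0: "Im (w / (H s - of_real x)\<^sup>2) = 0" by (rule DERIV_unique)
    have "cmod (w / (H s - of_real x)\<^sup>2) = Im (H s) / (cmod (H s - of_real x))\<^sup>2"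
      using v vw by (simp add: norm_divide norm_power)
    also have "\<dots> = 1 / h" using horo_facts(4)[OF h inC[of s]] ImH[of s] by simp
    finally have cm: "cmod (w / (H s - of_real x)\<^sup>2) = 1 / h" .
    have "(cmod (w / (H s - of_real x)\<^sup>2))\<^sup>2 = (Re (w / (H s - of_real x)\<^sup>2))\<^sup>2"
      using im0 by (simp add: cmod_power2)
    then show ?thesis using cm im0 by (simp add: power_divide)
  qed
  obtain V where V: "\<And>s. (H has_vector_derivative V s) (at s)" using ar by metis
  define f' where "f' = (\<lambda>s. Re (V s / (H s - of_real x)\<^sup>2))"
  define f where "f = (\<lambda>s. Re (g s))"
  have fd: "\<And>s. DERIV f s :> f' s" unfolding f_def f'_def g_def
    by (rule vd_Re[OF phi_deriv[OF V Hx]])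
  have pm: "\<And>s. f' s = 1/h \<or> f' s = - (1/h)"
  proof -
    fix s
    have "(f' s)\<^sup>2 = (1/h)\<^sup>2" using key[OF V[of s]] unfolding f'_def by simp
    then show "f' s = 1/h \<or> f' s = - (1/h)" using power2_eq_iff by blast
  qed
  have hp: "1/h > 0" using h by simp
  obtain \<sigma> where sg: "\<sigma> = 1 \<or> \<sigma> = -1" and fs: "\<And>s. f' s = \<sigma> / h"
    using darboux_pm[OF fd hp pm] by (metis divide_minus_left)
  have lin: "f s = f 0 + \<sigma> / h * s" for s
  proof -
    have "\<forall>t. DERIV (\<lambda>t. f t - \<sigma> / h * t) t :> 0"
    proof
      fix t
      have "DERIV (\<lambda>t. f t - \<sigma> / h * t) t :> f' t - \<sigma> / h"
        using DERIV_diff[OF fd DERIV_cmult_Id[of "\<sigma> / h" t]] by simp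
      then show "DERIV (\<lambda>t. f t - \<sigma> / h * t) t :> 0" using fs[of t] by simp
    qed
    from DERIV_isconst_all[OF this, of s 0] show ?thesis by simp
  qed
  have shiftf: "f (s + l) = f s - c" for s
  proof -
    have "- 1 / (moeb p (H s) - of_real x) = - 1 / (H s - of_real x) - of_real c"
      by (rule phi_shift[OF ImH pform[OF ImH]])
    then show ?thesis unfolding f_def g_def sh by simp
  qed
  have "\<sigma> * l = - c * h" using shiftf[of 0] lin[of l] h by (simp add: field_simps)
  moreover have "\<forall>s w. (H has_vector_derivative w) (at s) \<longrightarrow> Re (w / (H s - of_real x)\<^sup>2) = \<sigma> / h \<and> Im (w / (H s - of_real x)\<^sup>2) = 0"
  proof (intro allI impI)
    fix s w assume hw: "(H has_vector_derivative w) (at s)"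
    have "w = V s" using vector_derivative_unique_at[OF hw V] .
    then show "Re (w / (H s - of_real x)\<^sup>2) = \<sigma> / h \<and> Im (w / (H s - of_real x)\<^sup>2) = 0"
      using fs[of s] key[OF hw] unfolding f'_def by simp
  qed
  ultimately show ?thesis using sg by blast
qed

lemma u_lift_deriv: "(u_lift has_vector_derivative (\<i> * of_real (exp t))) (at t)"
proof -
  have "((\<lambda>t. \<i> * of_real (exp t)) has_vector_derivative (\<i> * of_real (exp t))) (at t)"
    by (rule has_vector_derivative_mult_right[OF has_vector_derivative_of_real[OF DERIV_exp]])
  then show ?thesis by (simp add: u_lift_def[abs_def])
qed

lemma reverse_param:
  assumes sp: "shift_param C p l H"
  shows "shift_param C p (- l) (\<lambda>s. H (- s))"
proof -
  have sp1: "arclength_param C H" using sp unfolding shift_param_def by (rule conjunct1)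
  have sp2: "\<forall>s. moeb p (H s) = H (s + l)" using sp unfolding shift_param_def by (rule conjunct2)
  have bij: "bij_betw H UNIV C" using sp1 unfolding arclength_param_def by (rule conjunct1)
  have ar: "\<forall>s. \<exists>v. (H has_vector_derivative v) (at s) \<and> cmod v = Im (H s)"
    using sp1 unfolding arclength_param_def by (rule conjunct2)
  have bij2: "bij_betw (\<lambda>s. H (- s)) UNIV C"
  proof -
    have "bij_betw (H \<circ> uminus) UNIV C"
      by (rule bij_betw_trans[OF _ bij]) (simp add: bij_uminus)
    then show ?thesis by (simp add: o_def)
  qed
  have ar2: "\<forall>s. \<exists>v. ((\<lambda>s. H (- s)) has_vector_derivative v) (at s) \<and> cmod v = Im (H (- s))"
  proof
    fix s
    obtain v where v: "(H has_vector_derivative v) (at (- s))" "cmod v = Im (H (- s))" using ar by blast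
    have m: "(uminus has_vector_derivative (-1::real)) (at s)"
    proof -
      have "((\<lambda>s. - s) has_real_derivative - 1) (at s)" by (rule DERIV_minus[OF DERIV_ident])
      then show ?thesis by (simp add: has_real_derivative_iff_has_vector_derivative)
    qed
    have "((H \<circ> uminus) has_vector_derivative ((-1::real) *\<^sub>R v)) (at s)"
      by (rule vector_diff_chain_at[OF m]) (simp add: v(1))
    then have "((\<lambda>s. H (- s)) has_vector_derivative (- v)) (at s)" by (simp add: o_def)
    then show "\<exists>v. ((\<lambda>s. H (- s)) has_vector_derivative v) (at s) \<and> cmod v = Im (H (- s))"
      using v(2) by (intro exI[of _ "- v"]) simp
  qed
  have sh2: "\<forall>s. moeb p (H (- s)) = H (- (s + - l))" using sp2 by (simp add: algebra_simps)
  show ?thesis unfolding shift_param_def arclength_param_def using bij2 ar2 sh2 by simp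
qed

lemma horo_length_eq:
  assumes h: "h > 0"
    and pform: "\<And>z. Im z > 0 \<Longrightarrow> moeb p z = of_real x + (z - of_real x) / (of_real c * (z - of_real x) + 1)"
    and sp: "shift_param (horocycle x h) p l0 H0"
  shows "horo_length (horocycle x h) p = \<bar>c * h\<bar>"
proof -
  have valid: "\<bar>l\<bar> = \<bar>c * h\<bar>" if spl: "shift_param (horocycle x h) p l H" for l H
  proof -
    obtain \<sigma> where "\<sigma> = 1 \<or> \<sigma> = -1" "\<sigma> * l = - c * h" using shift_lin[OF h pform spl] by blast
    then show ?thesis by (auto simp: abs_if)
  qed
  let ?P = "\<lambda>l. l \<ge> 0 \<and> (\<exists>H. shift_param (horocycle x h) p l H)"
  have P: "?P \<bar>c * h\<bar>"
  proof (cases "l0 \<ge> 0")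
    case True
    then show ?thesis using valid[OF sp] sp by auto
  next
    case False
    have "shift_param (horocycle x h) p (- l0) (\<lambda>s. H0 (- s))" by (rule reverse_param[OF sp])
    then show ?thesis using valid[OF sp] False by (intro conjI) (auto intro!: exI)
  qed
  have "(THE l. ?P l) = \<bar>c * h\<bar>"
  proof (rule the_equality)
    show "?P \<bar>c * h\<bar>" by (rule P)
    fix l assume "?P l"
    then obtain H where "l \<ge> 0" "shift_param (horocycle x h) p l H" by blast
    then show "l = \<bar>c * h\<bar>" using valid by fastforce
  qed
  then show ?thesis unfolding horo_length_def .
qed

lemma tangent_main:
  assumes h: "h > 0" and x: "x > 0" and c0: "c \<noteq> 0"
    and pform: "\<And>z. Im z > 0 \<Longrightarrow> moeb p z = of_real x + (z - of_real x) / (of_real c * (z - of_real x) + 1)"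
    and tg: "tangent_at t0 (horocycle x h) p"
  shows "exp t0 = x \<and> h = 2 * x \<and> c > 0 \<and> horo_length (horocycle x h) p = c * h"
proof -
  let ?L = "horo_length (horocycle x h) p"
  obtain H s0 v where sp: "shift_param (horocycle x h) p ?L H" and Hs0: "H s0 = u_lift t0"
    and du: "(u_lift has_vector_derivative v) (at t0)" and dH: "(H has_vector_derivative v) (at s0)"
    using tg unfolding tangent_at_def by blast
  have v: "v = \<i> * of_real (exp t0)" using vector_derivative_unique_at[OF du u_lift_deriv] .
  define y where "y = exp t0"
  have y0: "y > 0" by (simp add: y_def)
  have Hs: "H s0 = \<i> * of_real y" using Hs0 by (simp add: u_lift_def y_def)
  have vy: "v = \<i> * of_real y" using v by (simp add: y_def)
  obtain \<sigma> where sg: "\<sigma> = 1 \<or> \<sigma> = -1" and sl: "\<sigma> * ?L = - c * h"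
    and dd: "\<forall>s w. (H has_vector_derivative w) (at s) \<longrightarrow> Re (w / (H s - of_real x)\<^sup>2) = \<sigma> / h \<and> Im (w / (H s - of_real x)\<^sup>2) = 0"
    using shift_lin[OF h pform sp] by blast
  have inC: "H s0 \<in> horocycle x h"
    using sp unfolding shift_param_def arclength_param_def by (metis bij_betw_apply UNIV_I)
  have circ: "x\<^sup>2 + y\<^sup>2 = h * y" using horo_facts(2)[OF h inC] Hs by simp
  define Q where "Q = (x\<^sup>2 - y\<^sup>2)\<^sup>2 + (2*x*y)\<^sup>2"
  have sq: "(\<i> * of_real y - of_real x)\<^sup>2 = Complex (x\<^sup>2 - y\<^sup>2) (- 2*x*y)"
    by (simp add: complex_eq_iff power2_eq_square algebra_simps)
  have ImG: "Im (v / (H s0 - of_real x)\<^sup>2) = y * (x\<^sup>2 - y\<^sup>2) / Q"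
    unfolding vy Hs sq Q_def by (simp add: Im_divide power2_eq_square algebra_simps)
  have ReG: "Re (v / (H s0 - of_real x)\<^sup>2) = - 2*x*y\<^sup>2 / Q"
    unfolding vy Hs sq Q_def by (simp add: Re_divide power2_eq_square algebra_simps)
  have Qpos: "Q > 0" unfolding Q_def using x y0 by (simp add: add_nonneg_pos)
  have "y * (x\<^sup>2 - y\<^sup>2) / Q = 0" using dd dH ImG by simp
  then have "x\<^sup>2 = y\<^sup>2" using y0 Qpos by simp
  then have xy: "x = y" using x y0 by (simp add: power2_eq_iff)
  have h2: "h = 2 * x" using circ xy y0 by (simp add: power2_eq_square algebra_simps)
  have "Q = 4 * (x*x*x*x)" unfolding Q_def xy by (simp add: power2_eq_square algebra_simps)
  then have "- 2*x*y\<^sup>2 / Q = - 1 / h" using h2 xy x by (simp add: power2_eq_square field_simps)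
  then have "\<sigma> / h = - 1 / h" using dd dH ReG by simp
  then have sm: "\<sigma> = -1" using h by (simp add: field_simps)
  then have Lc: "?L = c * h" using sl by simp
  have "?L = \<bar>c * h\<bar>" by (rule horo_length_eq[OF h pform sp])
  then have "c * h \<ge> 0" using Lc by simp
  then have "c > 0" using c0 h by (simp add: zero_le_mult_iff)
  then show ?thesis using Lc h2 xy by (simp add: y_def)
qed

lemma hdist_asym:
  assumes b: "Im z > 0"
  shows "((\<lambda>t. hdist z (\<i> * of_real (exp t)) - t) \<longlongrightarrow> - ln (Im z)) at_top"
proof -
  define a where "a = Re z"
  define bb where "bb = Im z"
  have b0: "bb > 0" using b by (simp add: bb_def)
  define Y where "Y = (\<lambda>u::real. u + (a\<^sup>2 * u\<^sup>2 + (bb * u - 1)\<^sup>2) / (2 * bb))"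
  define F where "F = (\<lambda>u. ln (Y u + sqrt ((Y u)\<^sup>2 - u\<^sup>2)))"
  have eq: "hdist z (\<i> * of_real (exp t)) - t = F (exp (- t))" for t
  proof -
    define e where "e = exp t"
    have e0: "e > 0" by (simp add: e_def)
    define X where "X = 1 + (a\<^sup>2 + (bb - e)\<^sup>2) / (2 * bb * e)"
    have X1: "X \<ge> 1" unfolding X_def using b0 e0 by simp
    have cm: "(cmod (z - \<i> * of_real e))\<^sup>2 = a\<^sup>2 + (bb - e)\<^sup>2"
      by (simp add: cmod_power2 a_def bb_def)
    have hd: "hdist z (\<i> * of_real (exp t)) = ln (X + sqrt (X\<^sup>2 - 1))"
      unfolding hdist_def arcosh_def X_def cm[unfolded e_def]
      using X1[unfolded X_def e_def] 
      by (simp add: powr_half_sqrt bb_def e_def)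
    have u: "exp (- t) = 1 / e" by (simp add: e_def exp_minus field_simps)
    have Yu: "Y (1 / e) = X / e" unfolding Y_def X_def using e0 b0
      by (simp add: field_simps power2_eq_square)
    have "(Y (1/e))\<^sup>2 - (1/e)\<^sup>2 = (X\<^sup>2 - 1) / e\<^sup>2" unfolding Yu by (simp add: power_divide diff_divide_distrib)
    then have sq: "sqrt ((Y (1/e))\<^sup>2 - (1/e)\<^sup>2) = sqrt (X\<^sup>2 - 1) / e"
      using e0 by (simp add: real_sqrt_divide)
    have "1 \<le> X\<^sup>2" using X1 by (simp add: one_le_power)
    then have "sqrt (X\<^sup>2 - 1) \<ge> 0" by simp
    then have pos: "X + sqrt (X\<^sup>2 - 1) > 0" using X1 by linarith
    have "F (exp (- t)) = ln (Y (1/e) + sqrt ((Y (1/e))\<^sup>2 - (1/e)\<^sup>2))" by (simp add: F_def u)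
    also have "\<dots> = ln ((X + sqrt (X\<^sup>2 - 1)) / e)"
      unfolding sq unfolding Yu by (simp add: add_divide_distrib)
    also have "\<dots> = ln (X + sqrt (X\<^sup>2 - 1)) - t" using pos e0 by (simp add: ln_div e_def)
    finally show ?thesis using hd by simp
  qed
  have Y0: "Y 0 = 1 / (2 * bb)" by (simp add: Y_def)
  have F0: "F 0 = - ln bb"
  proof -
    have "sqrt ((Y 0)\<^sup>2 - 0\<^sup>2) = 1 / (2 * bb)" using b0 by (simp add: Y0 real_sqrt_divide)
    then have "F 0 = ln (1 / bb)" unfolding F_def using Y0 by simp
    then show ?thesis using b0 by (simp add: ln_div)
  qed
  have cont: "isCont F 0"
  proof -
    have "Y 0 + sqrt ((Y 0)\<^sup>2 - 0\<^sup>2) > 0" using b0 Y0 by simp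
    then show ?thesis unfolding F_def Y_def by (auto intro!: continuous_intros)
  qed
  have lim: "((\<lambda>t. exp (- t)) \<longlongrightarrow> (0::real)) at_top"
    by (rule filterlim_compose[OF exp_at_bot filterlim_uminus_at_bot_at_top])
  have "((\<lambda>t. F (exp (- t))) \<longlongrightarrow> F 0) at_top" by (rule isCont_tendsto_compose[OF cont lim])
  then show ?thesis unfolding eq F0 bb_def .
qed

lemma busemann_i:
  assumes b: "Im z > 0"
  shows "busemann_inf z \<i> = - ln (Im z)"
proof -
  have "((\<lambda>t. (hdist z (\<i> * of_real (exp t)) - t) - (hdist \<i> (\<i> * of_real (exp t)) - t)) \<longlongrightarrow> - ln (Im z) - (- ln (Im \<i>))) at_top"
    by (intro tendsto_diff hdist_asym b) simp
  then have "((\<lambda>t. hdist z (\<i> * of_real (exp t)) - hdist \<i> (\<i> * of_real (exp t))) \<longlongrightarrow> - ln (Im z)) at_top"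
    by simp
  then show ?thesis unfolding busemann_inf_def by (rule tendsto_Lim[rotated]) simp
qed

lemma det_mprod: "(\<And>j. det (f j) = 1) \<Longrightarrow> det (mprod_upto f n) = 1"
  by (induction n) (simp_all add: det_mult2)

theorem mainTheorem8:
  fixes G :: "mat2 set"
    and p :: "nat \<Rightarrow> mat2" and x :: "nat \<Rightarrow> real" and h :: "nat \<Rightarrow> real"
    and t :: "nat \<Rightarrow> real" and k :: "nat \<Rightarrow> nat"
  assumes Gamma: "torsion_free_fuchsian G"
    and cusp: "\<exists>A\<in>G. parabolic A"
    and p_in: "\<And>n. p n \<in> G"
    and p_par: "\<And>n. parabolic (p n)"
    and p_fix: "\<And>n. fixes_real (p n) (x n)"
    and h_pos: "\<And>n. h n > 0"
    and p_pres: "\<And>n. moeb (p n) ` horocycle (x n) (h n) = horocycle (x n) (h n)"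
    and tang: "\<And>n. tangent_at (t n) (horocycle (x n) (h n)) (p n)"
    and t_nonneg: "\<And>n. t n \<ge> 0"
    and t_inc: "incseq t"
    and t_lim: "filterlim t at_top sequentially"
    and x_pos: "\<And>n. x n > 0"
    and x_inc: "strict_mono x"
    and x_lim: "filterlim x at_top sequentially"
    and disj: "\<And>m n. m \<noteq> n \<Longrightarrow> horoball (x m) (h m) \<inter> horoball (x n) (h n) = {}"
    and ell_lim: "(\<lambda>n. horo_length (horocycle (x n) (h n)) (p n)) \<longlonglongrightarrow> 0"
    and k_sub: "strict_mono k"
    and summ: "summable (\<lambda>n. horo_length (horocycle (x (k n)) (h (k n))) (p (k n)))"
  shows "\<exists>r_alpha::real.
     (\<lambda>n. busemann_inf (moeb (matrix_inv (mprod_upto (\<lambda>j. p (k j)) n)) \<i>) \<i>) \<longlonglongrightarrow> r_alpha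
     \<and> (\<forall>n. \<bar>busemann_inf (moeb (matrix_inv (mprod_upto (\<lambda>j. p (k j)) n)) \<i>) \<i>\<bar>
            \<le> (\<Sum>i. horo_length (horocycle (x (k i)) (h (k i))) (p (k i))))
     \<and> \<bar>r_alpha\<bar> \<le> (\<Sum>i. horo_length (horocycle (x (k i)) (h (k i))) (p (k i)))"
proof -
  have "\<forall>n. \<exists>sd. (fst sd)\<^sup>2 = 1 \<and> snd sd \<noteq> 0 \<and> p n$1$1 = fst sd + x n * snd sd \<and> p n$1$2 = - (x n)\<^sup>2 * snd sd
      \<and> p n$2$1 = snd sd \<and> p n$2$2 = fst sd - x n * snd sd"
    using parabolic_form[OF p_par p_fix] by auto
  then obtain SD where SD: "\<And>n. (fst (SD n))\<^sup>2 = 1 \<and> snd (SD n) \<noteq> 0 \<and> p n$1$1 = fst (SD n) + x n * snd (SD n)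
      \<and> p n$1$2 = - (x n)\<^sup>2 * snd (SD n) \<and> p n$2$1 = snd (SD n) \<and> p n$2$2 = fst (SD n) - x n * snd (SD n)"
    by metis
  define c where "c n = fst (SD n) * snd (SD n)" for n
  have c0: "c n \<noteq> 0" for n using SD[of n] by (auto simp: c_def)
  have pform: "\<And>z. Im z > 0 \<Longrightarrow> moeb (p n) z = of_real (x n) + (z - of_real (x n)) / (of_real (c n) * (z - of_real (x n)) + 1)" for n
    unfolding c_def by (rule moeb_form) (use SD[of n] in auto)
  have iform: "\<And>z. Im z > 0 \<Longrightarrow> moeb (adj2 (p n)) z = of_real (x n) + (z - of_real (x n)) / (of_real (- c n) * (z - of_real (x n)) + 1)" for n
  proof -
    fix z :: complex assume z: "Im z > 0"
    have "moeb (adj2 (p n)) z = of_real (x n) + (z - of_real (x n)) / (of_real (fst (SD n) * (- snd (SD n))) * (z - of_real (x n)) + 1)"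
      by (rule moeb_form[OF _ z]) (use SD[of n] in \<open>auto simp: algebra_simps\<close>)
    then show "moeb (adj2 (p n)) z = of_real (x n) + (z - of_real (x n)) / (of_real (- c n) * (z - of_real (x n)) + 1)"
      by (simp add: c_def)
  qed
  have tm: "exp (t n) = x n \<and> h n = 2 * x n \<and> c n > 0 \<and> horo_length (horocycle (x n) (h n)) (p n) = c n * h n" for n
    by (rule tangent_main[OF h_pos x_pos c0 pform tang])
  have x1: "x n \<ge> 1" for n using tm[of n] t_nonneg[of n] by (metis one_le_exp_iff)
  have detp: "det (p n) = 1" for n using p_par[of n] by (simp add: parabolic_def)
  define \<alpha> where "\<alpha> j = p (k j)" for j
  define P where "P n = mprod_upto \<alpha> n" for n
  define w where "w n = moeb (adj2 (P n)) \<i>" for n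
  define ell where "ell j = horo_length (horocycle (x (k j)) (h (k j))) (p (k j))" for j
  define r where "r n = - ln (Im (w n))" for n
  have ell_eq: "ell j = 2 * c (k j) * x (k j)" for j
  proof -
    have "ell j = c (k j) * h (k j)" unfolding ell_def using tm[of "k j"] by blast
    also have "\<dots> = 2 * c (k j) * x (k j)" using tm[of "k j"] by simp
    finally show ?thesis .
  qed
  have detP: "det (P n) = 1" for n unfolding P_def by (rule det_mprod) (simp add: \<alpha>_def detp)
  have minv: "matrix_inv (P n) = adj2 (P n)" for n by (rule matrix_inv_det1[OF detP])
  have w0: "w 0 = moeb (adj2 (p (k 0))) \<i>" by (simp add: w_def P_def \<alpha>_def)
  have wS: "w (Suc n) = moeb (adj2 (p (k (Suc n)))) (w n)" for n
  proof -
    have "w (Suc n) = moeb (adj2 (\<alpha> (Suc n)) ** adj2 (P n)) \<i>"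
      by (simp add: w_def P_def adj2_mult)
    also have "\<dots> = moeb (adj2 (\<alpha> (Suc n))) (moeb (adj2 (P n)) \<i>)"
      by (rule moeb_mult) (simp_all add: det_adj2 detP \<alpha>_def detp)
    finally show ?thesis by (simp add: w_def \<alpha>_def)
  qed
  have Xmono: "x (k n) \<le> x (k (Suc n))" for n
    using x_inc k_sub by (simp add: strict_mono_less_eq)
  have stp: "0 \<le> Re (w (Suc n)) \<and> Re (w (Suc n)) \<le> x (k (Suc n)) \<and> 0 < Im (w (Suc n)) \<and> Im (w (Suc n)) \<le> 1
      \<and> 0 \<le> r (Suc n) - r n \<and> r (Suc n) - r n \<le> ell (Suc n)"
    if A: "0 \<le> Re (w n)" "Re (w n) \<le> x (k n)" "0 < Im (w n)" "Im (w n) \<le> 1" for n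
  proof -
    have st: "0 \<le> Re (w (Suc n)) \<and> Re (w (Suc n)) \<le> x (k (Suc n)) \<and> 0 < Im (w (Suc n)) \<and> Im (w (Suc n)) \<le> Im (w n)
       \<and> 0 \<le> ln (Im (w n) / Im (w (Suc n))) \<and> ln (Im (w n) / Im (w (Suc n))) \<le> 2 * c (k (Suc n)) * x (k (Suc n))"
    proof (rule step_lemma[OF x1])
      show "0 < c (k (Suc n))" using tm by blast
      show "w (Suc n) = of_real (x (k (Suc n))) + (w n - of_real (x (k (Suc n)))) / (of_real (- c (k (Suc n))) * (w n - of_real (x (k (Suc n)))) + 1)"
        unfolding wS by (rule iform) (rule A(3))
      show "Re (w n) \<le> x (k (Suc n))" using A(2) Xmono[of n] by linarith
    qed (use A in auto)
    have "r (Suc n) - r n = ln (Im (w n) / Im (w (Suc n)))"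
      unfolding r_def using st A(3) by (simp add: ln_div)
    then show ?thesis using st A(4) ell_eq[of "Suc n"] by auto
  qed
  have inv: "0 \<le> Re (w n) \<and> Re (w n) \<le> x (k n) \<and> 0 < Im (w n) \<and> Im (w n) \<le> 1
       \<and> 0 \<le> r n \<and> r n \<le> (\<Sum>j\<le>n. ell j)" for n
  proof (induction n)
    case 0
    have st: "0 \<le> Re (w 0) \<and> Re (w 0) \<le> x (k 0) \<and> 0 < Im (w 0) \<and> Im (w 0) \<le> Im \<i>
       \<and> 0 \<le> ln (Im \<i> / Im (w 0)) \<and> ln (Im \<i> / Im (w 0)) \<le> 2 * c (k 0) * x (k 0)"
    proof (rule step_lemma[OF x1])
      show "0 < c (k 0)" using tm by blast
      show "w 0 = of_real (x (k 0)) + (\<i> - of_real (x (k 0))) / (of_real (- c (k 0)) * (\<i> - of_real (x (k 0))) + 1)"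
        unfolding w0 by (rule iform) simp
    qed (use x_pos[of "k 0"] in auto)
    have "r 0 = ln (Im \<i> / Im (w 0))" unfolding r_def using st by (simp add: ln_div)
    then show ?case using st ell_eq[of 0] by auto
  next
    case (Suc n)
    then show ?case using stp[of n] by auto
  qed
  have rmono: "incseq r"
  proof (rule incseq_SucI)
    fix n show "r n \<le> r (Suc n)" using stp[of n] inv[of n] by auto
  qed
  have ell0: "ell j \<ge> 0" for j using ell_eq[of j] tm[of "k j"] x_pos[of "k j"] by simp
  have summ': "summable ell" using summ unfolding ell_def .
  have bnd: "r n \<le> suminf ell" for n
    using inv[of n] sum_le_suminf[OF summ', of "{..n}"] ell0 by fastforce
  have r0: "r n \<ge> 0" for n using inv[of n] by simp
  have busem: "busemann_inf (moeb (matrix_inv (mprod_upto (\<lambda>j. p (k j)) n)) \<i>) \<i> = r n" for n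
  proof -
    have "moeb (matrix_inv (mprod_upto (\<lambda>j. p (k j)) n)) \<i> = w n"
      using minv[of n] by (simp add: w_def P_def \<alpha>_def[abs_def])
    then show ?thesis using busemann_i[of "w n"] inv[of n] by (simp add: r_def)
  qed
  have bdd: "bdd_above (range r)" unfolding bdd_above_def using bnd by blast
  have lim: "r \<longlonglongrightarrow> (SUP n. r n)" by (rule LIMSEQ_incseq_SUP[OF bdd rmono])
  have sup_le: "(SUP n. r n) \<le> suminf ell" by (rule cSUP_least) (auto simp: bnd)
  have sup_ge: "r 0 \<le> (SUP n. r n)" by (rule cSUP_upper[OF _ bdd]) simp
  show ?thesis
  proof (intro exI conjI allI)
    show "(\<lambda>n. busemann_inf (moeb (matrix_inv (mprod_upto (\<lambda>j. p (k j)) n)) \<i>) \<i>) \<longlonglongrightarrow> (SUP n. r n)"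
      unfolding busem using lim .
    fix n
    show "\<bar>busemann_inf (moeb (matrix_inv (mprod_upto (\<lambda>j. p (k j)) n)) \<i>) \<i>\<bar>
            \<le> (\<Sum>i. horo_length (horocycle (x (k i)) (h (k i))) (p (k i)))"
      unfolding busem using bnd[of n] r0[of n] by (simp add: ell_def[abs_def])
  next
    show "\<bar>SUP n. r n\<bar> \<le> (\<Sum>i. horo_length (horocycle (x (k i)) (h (k i))) (p (k i)))"
      using sup_le sup_ge r0[of 0] by (simp add: ell_def[abs_def])
  qed
qed

end
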